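(* Suppose UE $i$ decodes $x_{A1}$ first (i.e., $i\overset{(1)}{\to}x_{A1}$). Then the rate region $\mathcal{R}_{1}(\mathcal{P}_{1})\cup\mathcal{R}_{2}(\mathcal{P}_{2})$ is achievable, where $$\mathcal{R}_{1}(\mathcal{P}_{1})=\bigcup_{\mathbf{p}\in\mathcal{P}_{1}}\Big\{\mathbf{r}\in\mathbb{R}_+^4 \;\Big|\; r_{i,1}\le C\Big(\tfrac{p_{i,1}}{p_{i,2}+p_{j,2}+\alpha_{i}}\Big),\; r_{i,2}\le C\Big(\tfrac{p_{i,2}}{\alpha_{i}}\Big),\; r_{j,s}\le C\Big(\tfrac{p_{j,s}}{p_{i,2}+\alpha_{j}}\Big)\ (s=1,2),\; r_{j,1}+r_{j,2}\le C\Big(\tfrac{p_{j,1}+p_{j,2}}{p_{i,2}+\alpha_{j}}\Big)\Big\},$$ $$\mathcal{R}_{2}(\mathcal{P}_{2})=\bigcup_{\mathbf{p}\in\mathcal{P}_{2}}\Big\{\mathbf{r}\in\mathbb{R}_+^4 \;\Big|\; r_{i,1}\le C\Big(\tfrac{p_{i,1}}{p_{i,2}+p_{j,2}+\alpha_{i}}\Big),\; r_{i,2}\le C\Big(\tfrac{p_{i,2}}{p_{j,2}+\alpha_{i}}\Big),\; r_{j,1}\le C\Big(\tfrac{p_{j,1}}{\alpha_{j}}\Big),\; r_{j,2}\le C\Big(\tfrac{p_{j,2}}{p_{i,2}+p_{j,1}+\alpha_{j}}\Big)\Big\},$$ with $\mathcal{P}_{1}=\mathcal{P}$ and $\mathcal{P}_{2}=\{\mathbf{p}\in\mathcal{P}\mid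 p_{j,2}-p_{j,1}>\alpha_{j}-\alpha_{i}\}$. The region $\mathcal{R}_{1}(\mathcal{P}_{1})$ is achieved by the decoding orders $i\overset{(1)}{\to}x_{A1}\overset{(2)}{\to}x_{B2}\overset{(3)}{\to}x_{A2}$ and $j\overset{(1)}{\to}(x_{B1},x_{B2})$; the region $\mathcal{R}_{2}(\mathcal{P}_{2})$ is achieved by the decoding orders $i\overset{(1)}{\to}x_{A1}\overset{(2)}{\to}x_{A2}$ and $j\overset{(1)}{\to}x_{A2}\overset{(2)}{\to}x_{B2}\overset{(3)}{\to}x_{B1}$.
   Context: Two-user downlink with a single-antenna base station (BS) and user equipments UE $i$ and UE $j$. UE $i$ requests file $W_A$ and UE $j$ requests file $W_B$; each file $W_f$ is split into subfiles, and the BS transmits four independent unit-power Gaussian codewords $x_{A1},x_{A2}$ (intended for UE $i$) and $x_{B1},x_{B2}$ (intended for UE $j$) with transmit powers $p_{i,1},p_{i,2},p_{j,1},p_{j,2}\ge 0$, i.e. $x=\sqrt{p_{i,1}}x_{A1}+\sqrt{p_{i,2}}x_{A2}+\sqrt{p_{j,1}}x_{B1}+\sqrt{p_{j,2}}x_{B2}$. Power vector $\mathbf{p}=(p_{i,1},p_{i,2},p_{j,1},p_{j,2})$, feasible set $\mathcal{P}=\{\mathbf{p}\in\mathbb{R}_+^4\mid p_{i,1}+p_{i,2}+p_{j,1}+p_{j,2}\le P\}$ for a total power budget $P>0$. UE $k$ receives $y_k=h_kx+z_k$ with $z_k\sim\mathcal{CN}(0,\sigma_k^2)$; the effective noise variance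 is $\alpha_k=\sigma_k^2/|h_k|^2$, and it is assumed $0<\alpha_i<\alpha_j$. Because UE $j$ has cached the data carried by $x_{A1}$ and UE $i$ has cached the data carried by $x_{B1}$, these are removed by cache-enabled interference cancellation, so the effective received signals (after normalizing by $h_k$) are: at UE $i$, $\sqrt{p_{i,1}}x_{A1}+\sqrt{p_{i,2}}x_{A2}+\sqrt{p_{j,2}}x_{B2}$ plus Gaussian noise of variance $\alpha_i$; at UE $j$, $\sqrt{p_{i,2}}x_{A2}+\sqrt{p_{j,1}}x_{B1}+\sqrt{p_{j,2}}x_{B2}$ plus Gaussian noise of variance $\alpha_j$. $C(\Gamma)=\log_2(1+\Gamma)$. Rate vector $\mathbf{r}=(r_{i,1},r_{i,2},r_{j,1},r_{j,2})$, where $r_{i,s}$ is the rate of $x_{As}$ and $r_{j,s}$ the rate of $x_{Bs}$. Receivers perform successive interference cancellation (SIC): signals are decoded in steps, each decoded signal being subtracted before later steps and undecoded signals treated as Gaussian noise; several signals may be jointly decoded in one step (multiple-access decoding). A signal intended for the other user may be decoded and cancelled only if its rate is supported at that decoding step at the decoding user. Notation: $k\overset{(n)}{\to}x_f$ means $x_f$ is the $n$-th decoded signal at UE $k$; $k\overset{(n)}{\to}(x_f,x_{f'})$ means $x_f,x_{f'}$ are jointly decoded in the $n$-th step. A rate vector is achievable if there is a power vector in the indicated set and decoding orders under which all intended signals (and all cancelled interfering signals) are decoded reliably at those rates. *)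

theory Defs
  imports Complex_Main
begin

datatype sig = A1 | A2 | B1 | B2
datatype ue = UEi | UEj

text \<open>Power vector p and rate vector r are functions on the four signals:
  p A1 = p_{i,1}, p A2 = p_{i,2}, p B1 = p_{j,1}, p B2 = p_{j,2}; similarly r.\<close>

definition Cap :: "real \<Rightarrow> real" where
  "Cap g = log 2 (1 + g)"

definition alpha :: "real \<Rightarrow> real \<Rightarrow> ue \<Rightarrow> real" where
  "alpha ai aj k = (case k of UEi \<Rightarrow> ai | UEj \<Rightarrow> aj)"

text \<open>Signals present at each UE after cache-enabled interference cancellation.\<close>
definition present :: "ue \<Rightarrow> sig set" where
  "present k = (case k of UEi \<Rightarrow> {A1, A2, B2} | UEj \<Rightarrow> {A2, B1, B2})"

definition intended :: "ue \<Rightarrow> sig set" where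
  "intended k = (case k of UEi \<Rightarrow> {A1, A2} | UEj \<Rightarrow> {B1, B2})"

definition feasible_powers :: "real \<Rightarrow> (sig \<Rightarrow> real) set" where
  "feasible_powers Pt = {p. (\<forall>s. p s \<ge> 0) \<and> p A1 + p A2 + p B1 + p B2 \<le> Pt}"

text \<open>A SIC decoding order at a UE is a list of decoding steps; each step is the
  (nonempty) set of signals jointly decoded in that step.\<close>
definition valid_order :: "ue \<Rightarrow> sig set list \<Rightarrow> bool" where
  "valid_order k ord \<longleftrightarrow>
     (\<forall>S\<in>set ord. S \<noteq> {} \<and> S \<subseteq> present k) \<and>
     (\<forall>m<length ord. \<forall>n<length ord. m \<noteq> n \<longrightarrow> ord ! m \<inter> ord ! n = {}) \<and>
     intended k \<subseteq> \<Union> (set ord)"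

text \<open>Step n is reliable: the signals jointly decoded in step n satisfy the
  multiple-access constraints, with previously decoded signals cancelled and all
  still undecoded signals treated as Gaussian noise.\<close>
definition step_ok :: "real \<Rightarrow> real \<Rightarrow> ue \<Rightarrow> (sig \<Rightarrow> real) \<Rightarrow> (sig \<Rightarrow> real)
    \<Rightarrow> sig set list \<Rightarrow> nat \<Rightarrow> bool" where
  "step_ok ai aj k p r ord n \<longleftrightarrow>
     (let S = ord ! n;
          U = present k - \<Union> (set (take (Suc n) ord))
      in \<forall>T. T \<subseteq> S \<and> T \<noteq> {} \<longrightarrow>
             (\<Sum>s\<in>T. r s) \<le> Cap ((\<Sum>s\<in>T. p s) / ((\<Sum>s\<in>U. p s) + alpha ai aj k)))"

definition decodable :: "real \<Rightarrow> real \<Rightarrow> ue \<Rightarrow> (sig \<Rightarrow> real) \<Rightarrow> (sig \<Rightarrow> real)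
    \<Rightarrow> sig set list \<Rightarrow> bool" where
  "decodable ai aj k p r ord \<longleftrightarrow>
     valid_order k ord \<and> (\<forall>n<length ord. step_ok ai aj k p r ord n)"

definition achievable_A1_first :: "real \<Rightarrow> real \<Rightarrow> (sig \<Rightarrow> real) set \<Rightarrow> (sig \<Rightarrow> real) \<Rightarrow> bool" where
  "achievable_A1_first ai aj Ps r \<longleftrightarrow>
     (\<exists>p\<in>Ps. \<exists>oi oj. oi \<noteq> [] \<and> hd oi = {A1} \<and>
        decodable ai aj UEi p r oi \<and> decodable ai aj UEj p r oj)"

definition nonneg_rates :: "(sig \<Rightarrow> real) \<Rightarrow> bool" where
  "nonneg_rates r \<longleftrightarrow> (\<forall>s. r s \<ge> 0)"

definition R1_at :: "real \<Rightarrow> real \<Rightarrow> (sig \<Rightarrow> real) \<Rightarrow> (sig \<Rightarrow> real) set" where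
  "R1_at ai aj p = {r. nonneg_rates r \<and>
     r A1 \<le> Cap (p A1 / (p A2 + p B2 + ai)) \<and>
     r A2 \<le> Cap (p A2 / ai) \<and>
     r B1 \<le> Cap (p B1 / (p A2 + aj)) \<and>
     r B2 \<le> Cap (p B2 / (p A2 + aj)) \<and>
     r B1 + r B2 \<le> Cap ((p B1 + p B2) / (p A2 + aj))}"

definition R2_at :: "real \<Rightarrow> real \<Rightarrow> (sig \<Rightarrow> real) \<Rightarrow> (sig \<Rightarrow> real) set" where
  "R2_at ai aj p = {r. nonneg_rates r \<and>
     r A1 \<le> Cap (p A1 / (p A2 + p B2 + ai)) \<and>
     r A2 \<le> Cap (p A2 / (p B2 + ai)) \<and>
     r B1 \<le> Cap (p B1 / aj) \<and>
     r B2 \<le> Cap (p B2 / (p A2 + p B1 + aj))}"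

definition P1 :: "real \<Rightarrow> (sig \<Rightarrow> real) set" where
  "P1 Pt = feasible_powers Pt"

definition P2 :: "real \<Rightarrow> real \<Rightarrow> real \<Rightarrow> (sig \<Rightarrow> real) set" where
  "P2 ai aj Pt = {p \<in> feasible_powers Pt. p B2 - p B1 > aj - ai}"

definition region :: "((sig \<Rightarrow> real) \<Rightarrow> (sig \<Rightarrow> real) set) \<Rightarrow> (sig \<Rightarrow> real) set
    \<Rightarrow> (sig \<Rightarrow> real) set" where
  "region R Ps = (\<Union>p\<in>Ps. R p)"

end

theory Submission
  imports Defs
begin

lemma Cap_mono: "0 \<le> x \<Longrightarrow> x \<le> y \<Longrightarrow> Cap x \<le> Cap y"
  unfolding Cap_def by simp

lemma sub1: "T \<subseteq> {a} \<Longrightarrow> T \<noteq> {} \<Longrightarrow> T = {a}" by auto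
lemma sub2: "T \<subseteq> {a,b} \<Longrightarrow> T \<noteq> {} \<Longrightarrow> T = {a} \<or> T = {b} \<or> T = {a,b}" by auto

lemma lt3: "(n::nat) < 3 \<Longrightarrow> n = 0 \<or> n = 1 \<or> n = 2" by auto
lemma lt2: "(n::nat) < 2 \<Longrightarrow> n = 0 \<or> n = 1" by auto

lemma partR1:
  assumes ai: "0 < ai" and aij: "ai < aj" and p: "p \<in> P1 Pt" and r: "r \<in> R1_at ai aj p"
  shows "decodable ai aj UEi p r [{A1}, {B2}, {A2}] \<and> decodable ai aj UEj p r [{B1, B2}]"
proof -
  have pn: "\<And>s. p s \<ge> 0" using p by (simp add: P1_def feasible_powers_def)
  have r1: "r A1 \<le> Cap (p A1 / (p A2 + p B2 + ai))" "r A2 \<le> Cap (p A2 / ai)"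
    "r B1 \<le> Cap (p B1 / (p A2 + aj))" "r B2 \<le> Cap (p B2 / (p A2 + aj))"
    "r B1 + r B2 \<le> Cap ((p B1 + p B2) / (p A2 + aj))" using r by (auto simp: R1_at_def)
  have dv: "p B2 / (p A2 + aj) \<le> p B2 / (p A2 + ai)"
    using pn[of B2] pn[of A2] ai aij by (intro divide_left_mono) auto
  have r1': "r A1 \<le> Cap (p A1 / (ai + (p A2 + p B2)))" using r1(1) by (simp add: ac_simps)
  have rb2: "r B2 \<le> Cap (p B2 / (p A2 + ai))"
    using dv r1(4) Cap_mono[of "p B2 / (p A2 + aj)"] pn[of B2] pn[of A2] ai aij by force
  have rb2': "r B2 \<le> Cap (p B2 / (ai + p A2))" using rb2 by (simp add: ac_simps)
  have i: "decodable ai aj UEi p r [{A1}, {B2}, {A2}]"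
    unfolding decodable_def valid_order_def
  proof (intro conjI allI impI)
    fix n assume "n < length [{A1}, {B2}, {A2}]"
    then have "n = 0 \<or> n = 1 \<or> n = 2" by auto
    then show "step_ok ai aj UEi p r [{A1}, {B2}, {A2}] n"
      unfolding step_ok_def Let_def
      by (elim disjE) (auto dest!: sub1 simp: present_def alpha_def r1 r1' rb2' insert_Diff_if add.commute add.left_commute)
  qed (auto simp: present_def intended_def nth_Cons split: nat.splits)
  have r1'': "r B1 \<le> Cap (p B1 / (aj + p A2))" "r B2 \<le> Cap (p B2 / (aj + p A2))"
     "r B1 + r B2 \<le> Cap ((p B1 + p B2) / (aj + p A2))" using r1(3,4,5) by (simp_all add: ac_simps)
  have j: "decodable ai aj UEj p r [{B1, B2}]"
    unfolding decodable_def valid_order_def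
  proof (intro conjI allI impI)
    fix n assume "n < length [{B1, B2}]"
    then have "n = 0" by simp
    then show "step_ok ai aj UEj p r [{B1, B2}] n"
      unfolding step_ok_def Let_def
      by (auto dest!: sub2 simp: present_def alpha_def r1 r1'' insert_Diff_if)
  qed (auto simp: present_def intended_def)
  show ?thesis using i j by simp
qed

lemma partR2:
  assumes ai: "0 < ai" and aij: "ai < aj" and p: "p \<in> P2 ai aj Pt" and r: "r \<in> R2_at ai aj p"
  shows "decodable ai aj UEi p r [{A1}, {A2}] \<and> decodable ai aj UEj p r [{B2}, {A2}, {B1}]"
proof -
  have pn: "\<And>s. p s \<ge> 0" and gap: "p B2 - p B1 > aj - ai"
    using p by (auto simp: P2_def feasible_powers_def)
  have r1: "r A1 \<le> Cap (p A1 / (p A2 + p B2 + ai))" "r A2 \<le> Cap (p A2 / (p B2 + ai))"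
    "r B1 \<le> Cap (p B1 / aj)" "r B2 \<le> Cap (p B2 / (p A2 + p B1 + aj))"
    using r by (auto simp: R2_at_def)
  have dv: "p A2 / (p B2 + ai) \<le> p A2 / (p B1 + aj)"
    using pn[of B1] pn[of A2] ai aij gap by (intro divide_left_mono) auto
  have r2': "r A1 \<le> Cap (p A1 / (ai + (p A2 + p B2)))" "r A2 \<le> Cap (p A2 / (ai + p B2))" using r1(1,2) by (simp_all add: ac_simps)
  have ra2: "r A2 \<le> Cap (p A2 / (p B1 + aj))"
    using dv r1(2) Cap_mono[of "p A2 / (p B2 + ai)"] pn[of B2] pn[of A2] ai by force
  have i: "decodable ai aj UEi p r [{A1}, {A2}]"
    unfolding decodable_def valid_order_def
  proof (intro conjI allI impI)
    fix n assume "n < length [{A1}, {A2}]"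
    then have "n = 0 \<or> n = 1" by auto
    then show "step_ok ai aj UEi p r [{A1}, {A2}] n"
      unfolding step_ok_def Let_def
      by (elim disjE) (auto dest!: sub1 simp: present_def alpha_def r1 r2' insert_Diff_if add.commute add.left_commute)
  qed (auto simp: present_def intended_def nth_Cons split: nat.splits)
  have r3: "r B2 \<le> Cap (p B2 / (aj + (p A2 + p B1)))" "r A2 \<le> Cap (p A2 / (aj + p B1))"
    using r1(4) ra2 by (simp_all add: ac_simps)
  have j: "decodable ai aj UEj p r [{B2}, {A2}, {B1}]"
    unfolding decodable_def valid_order_def
  proof (intro conjI allI impI)
    fix n assume "n < length [{B2}, {A2}, {B1}]"
    then have "n = 0 \<or> n = 1 \<or> n = 2" by auto
    then show "step_ok ai aj UEj p r [{B2}, {A2}, {B1}] n"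
      unfolding step_ok_def Let_def
      by (elim disjE) (auto dest!: sub1 simp: present_def alpha_def r1 r3 insert_Diff_if add.commute add.left_commute)
  qed (auto simp: present_def intended_def nth_Cons split: nat.splits)
  show ?thesis using i j by simp
qed

theorem proposition1:
  fixes ai aj Pt :: real
  assumes "0 < ai" and "ai < aj" and "0 < Pt"
  shows "(\<forall>r \<in> region (R1_at ai aj) (P1 Pt) \<union> region (R2_at ai aj) (P2 ai aj Pt).
            achievable_A1_first ai aj (feasible_powers Pt) r)
       \<and> (\<forall>p \<in> P1 Pt. \<forall>r \<in> R1_at ai aj p.
            decodable ai aj UEi p r [{A1}, {B2}, {A2}] \<and>
            decodable ai aj UEj p r [{B1, B2}])
       \<and> (\<forall>p \<in> P2 ai aj Pt. \<forall>r \<in> R2_at ai aj p.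
            decodable ai aj UEi p r [{A1}, {A2}] \<and>
            decodable ai aj UEj p r [{B2}, {A2}, {B1}])"
proof (intro conjI[OF _ conjI] ballI)
  fix r assume "r \<in> region (R1_at ai aj) (P1 Pt) \<union> region (R2_at ai aj) (P2 ai aj Pt)"
  then show "achievable_A1_first ai aj (feasible_powers Pt) r"
  proof
    assume "r \<in> region (R1_at ai aj) (P1 Pt)"
    then obtain p where p: "p \<in> P1 Pt" "r \<in> R1_at ai aj p" by (auto simp: region_def)
    show ?thesis unfolding achievable_A1_first_def
      using partR1[OF assms(1,2) p] p(1) unfolding P1_def by (intro bexI[of _ p]; simp) (intro exI[of _ "[{A1}, {B2}, {A2}]"] conjI exI[of _ "[{B1, B2}]"]; simp)
  next
    assume "r \<in> region (R2_at ai aj) (P2 ai aj Pt)"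
    then obtain p where p: "p \<in> P2 ai aj Pt" "r \<in> R2_at ai aj p" by (auto simp: region_def)
    show ?thesis unfolding achievable_A1_first_def
      using partR2[OF assms(1,2) p] p(1) unfolding P2_def by (intro bexI[of _ p]; simp) (intro exI[of _ "[{A1}, {A2}]"] conjI exI[of _ "[{B2}, {A2}, {B1}]"]; simp)
  qed
next
  fix p r assume h: "p \<in> P1 Pt" "r \<in> R1_at ai aj p"
  from partR1[OF assms(1,2) h] show "decodable ai aj UEi p r [{A1}, {B2}, {A2}] \<and> decodable ai aj UEj p r [{B1, B2}]"
    .
next
  fix p r assume h: "p \<in> P2 ai aj Pt" "r \<in> R2_at ai aj p"
  from partR2[OF assms(1,2) h] show "decodable ai aj UEi p r [{A1}, {A2}] \<and> decodable ai aj UEj p r [{B2}, {A2}, {B1}]"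
    .
qed

end
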